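(* Let $m,n\in\mathbb N$ and let $A=(\alpha_{ij})$ be a real $m\times n$ matrix with $\operatorname{rank}(A)=n$. Let $\beta\in\mathbb R_m$, $\varepsilon\ge 0$ and $F\in S(A,\beta,\varepsilon)$. Let $y\in\mathbb R_n$ and $\delta\ge0$ with $\|Ay^T-\beta^T\|_\infty\le\delta$. Put $C:=F(1,\dots,1)$ and $D:=(A^T)^{\dagger}$, and fix $K>1$. Then for every $v=(v_1,\dots,v_n)\in\mathbb R_n^+$ with $K^{-1}\le v_i\le K$ for all $i=1,\dots,n$, $$|F(v)-Cv^y|\le |F(v)|\big((1+\varepsilon)K^{m\delta\|D\|}-1\big).$$
   Context: $\mathbb R^m$ denotes real column vectors of length $m$, $\mathbb R_m$ real row vectors of length $m$; $\mathbb R_m^+$ (resp. $\mathbb R_n^+$) denotes the row vectors with all entries strictly positive. For $c=(c_1,\dots,c_m)\in\mathbb R_m^+$ and $\alpha=(\alpha_1,\dots,\alpha_m)\in\mathbb R_m$, $c^\alpha:=\prod_{i=1}^m c_i^{\alpha_i}$ (similarly $v^y=\prod_j v_j^{y_j}$ for $v\in\mathbb R_n^+$, $y\in\mathbb R_n$). For a real $m\times n$ matrix $A$ with columns $\alpha_1^T,\dots,\alpha_n^T$ (so $\alpha_j\in\mathbb R_m$), $\beta\in\mathbb R_m$ and $\varepsilon\ge0$, $S(A,\beta,\varepsilon)$ is the set of all functions $F:\mathbb R_n^+\to\mathbb R$ such that $$|F(v_1c^{\alpha_1},\dots,v_nc^{\alpha_n})-F(v_1,\dots,v_n)c^\beta|\le\varepsilon|F(v_1,\dots,v_n)|c^\beta$$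 for all $v_1,\dots,v_n>0$ and all $c\in\mathbb R_m^+$. $B^\dagger$ denotes the Moore–Penrose pseudoinverse of a real matrix $B$. $\|\cdot\|_\infty$ is the maximum norm on $\mathbb R^n$, $\mathbb R^m$, and for a matrix $B=(b_{ij})$, $\|B\|=\max_i\sum_j|b_{ij}|$ is the induced operator norm. *)

theory Defs
  imports "HOL-Analysis.Analysis"
begin

text \<open>Vectors in R_m are modelled as real^'m, an m x n matrix as real^'n^'m
  (rows indexed by 'm, columns by 'n).  Row j-th column of A: (\<chi> i. A$i$j).\<close>

definition mp_pinv :: "real^'n^'m \<Rightarrow> real^'m^'n" where
  "mp_pinv B = (THE X. B ** X ** B = B \<and> X ** B ** X = X \<and>
                 transpose (B ** X) = B ** X \<and> transpose (X ** B) = X ** B)"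

definition vpow :: "real^'m \<Rightarrow> real^'m \<Rightarrow> real" where
  "vpow c a = (\<Prod>i\<in>UNIV. (c $ i) powr (a $ i))"

definition pos_vec :: "real^'n \<Rightarrow> bool" where
  "pos_vec v \<longleftrightarrow> (\<forall>i. v $ i > 0)"

definition max_norm :: "real^'m \<Rightarrow> real" where
  "max_norm x = Max (range (\<lambda>i. \<bar>x $ i\<bar>))"

definition row_sum_norm :: "real^'n^'m \<Rightarrow> real" where
  "row_sum_norm B = Max (range (\<lambda>i. \<Sum>j\<in>UNIV. \<bar>B $ i $ j\<bar>))"

definition S_class :: "real^'n^'m \<Rightarrow> real^'m \<Rightarrow> real \<Rightarrow> (real^'n \<Rightarrow> real) set" where
  "S_class A \<beta> \<epsilon> = {F. \<forall>v c. pos_vec v \<longrightarrow> pos_vec c \<longrightarrow>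
      \<bar>F (\<chi> j. v $ j * vpow c (\<chi> i. A $ i $ j)) - F v * vpow c \<beta>\<bar>
        \<le> \<epsilon> * \<bar>F v\<bar> * vpow c \<beta>}"

end

theory Submission
  imports Defs
begin
lemma pinv_unique:
  fixes B :: "real^'m^'n" and X Y :: "real^'n^'m"
  assumes "B ** X ** B = B" "X ** B ** X = X" "transpose (B ** X) = B ** X" "transpose (X ** B) = X ** B"
   and "B ** Y ** B = B" "Y ** B ** Y = Y" "transpose (B ** Y) = B ** Y" "transpose (Y ** B) = Y ** B"
  shows "X = Y"
proof -
  have "X = X ** (B ** X)" using assms(2) by (simp add: matrix_mul_assoc)
  also have "\<dots> = X ** transpose (B ** X)" using assms(3) by simp
  also have "\<dots> = X ** (transpose X ** transpose B)" by (simp add: matrix_transpose_mul)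
  also have "\<dots> = X ** (transpose X ** transpose (B ** Y ** B))" using assms(5) by simp
  also have "\<dots> = X ** (transpose X ** (transpose B ** transpose (B ** Y)))" by (simp add: matrix_transpose_mul)
  also have "\<dots> = X ** ((transpose X ** transpose B) ** (B ** Y))" using assms(7) by (simp add: matrix_mul_assoc)
  also have "\<dots> = X ** (transpose (B ** X) ** (B ** Y))" by (simp add: matrix_transpose_mul)
  also have "\<dots> = (X ** B ** X) ** B ** Y" using assms(3) by (simp add: matrix_mul_assoc)
  finally have x: "X = X ** B ** Y" using assms(2) by simp
  have "Y = (Y ** B) ** Y" using assms(6) by simp
  also have "\<dots> = transpose (Y ** B) ** Y" using assms(8) by simp
  also have "\<dots> = (transpose B ** transpose Y) ** Y" by (simp add: matrix_transpose_mul)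
  also have "\<dots> = (transpose (B ** (X ** B)) ** transpose Y) ** Y" using assms(1) by (simp add: matrix_mul_assoc)
  also have "\<dots> = ((X ** B) ** transpose B ** transpose Y) ** Y" using assms(4) by (simp add: matrix_transpose_mul)
  also have "\<dots> = (X ** B) ** transpose (Y ** B) ** Y" by (simp add: matrix_transpose_mul matrix_mul_assoc)
  also have "\<dots> = X ** B ** Y" using assms(8,6) by (metis matrix_mul_assoc)
  finally show ?thesis using x by simp
qed

lemma mp_right_inv:
  fixes A :: "real^'n^'m" assumes "rank A = CARD('n)"
  shows "transpose A ** mp_pinv (transpose A) = mat 1"
proof -
  have inj: "inj ((*v) A)" using assms full_rank_injective by blast
  define M where "M = transpose A ** A"
  have "\<forall>x. M *v x = 0 \<longrightarrow> x = 0"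
  proof (intro allI impI)
    fix x assume "M *v x = 0"
    hence "(A *v x) v* A = 0" unfolding M_def by (simp add: matrix_vector_mul_assoc[symmetric])
    hence "inner ((A *v x) v* A) x = 0" by simp
    hence "inner (A *v x) (A *v x) = 0" by (simp add: dot_lmul_matrix)
    hence "A *v x = A *v 0" by simp
    thus "x = 0" by (rule injD[OF inj])
  qed
  then obtain N where N: "N ** M = mat 1" using matrix_left_invertible_ker by blast
  hence N2: "M ** N = mat 1" using matrix_left_right_inverse by blast
  have tM: "transpose M = M" unfolding M_def by (simp add: matrix_transpose_mul)
  have "transpose N ** M = mat 1" using N2 tM by (metis matrix_transpose_mul transpose_mat)
  hence tN: "transpose N = N"
    by (metis N2 matrix_mul_assoc matrix_mul_lid matrix_mul_rid)
  define X where "X = A ** N"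
  let ?B = "transpose A"
  have BX: "?B ** X = mat 1" unfolding X_def using N2 M_def by (simp add: matrix_mul_assoc)
  let ?P = "\<lambda>X. ?B ** X ** ?B = ?B \<and> X ** ?B ** X = X \<and>
                 transpose (?B ** X) = ?B ** X \<and> transpose (X ** ?B) = X ** ?B"
  have PX: "?P X"
    using BX tN by (simp add: matrix_mul_assoc[symmetric] matrix_transpose_mul X_def)
  have "mp_pinv ?B = X" unfolding mp_pinv_def
  proof (rule the_equality)
    show "?P X" by (rule PX)
    fix Y assume "?P Y" thus "Y = X" using PX pinv_unique[of ?B Y X] by blast
  qed
  thus ?thesis using BX by simp
qed
lemma abs_1_exp: "\<bar>1 - exp (t::real)\<bar> \<le> exp \<bar>t\<bar> - 1"
proof (cases "t \<ge> 0")
  case True thus ?thesis by simp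
next
  case False
  define a where "a = exp t"
  have a0: "a > 0" unfolding a_def by simp
  have a1: "a \<le> 1" unfolding a_def using False by simp
  have ei: "exp \<bar>t\<bar> = inverse a" unfolding a_def using False by (simp add: exp_minus)
  have "0 \<le> (1 - a) * (1 - a)" by simp
  hence "2 * a \<le> 1 + a * a" by (simp add: algebra_simps)
  hence "1 - a \<le> inverse a - 1" using a0 by (simp add: field_simps)
  thus ?thesis using a1 ei unfolding a_def by simp
qed

theorem theorem3p1:
  fixes A :: "real^'n^'m" and \<beta> :: "real^'m" and \<epsilon> \<delta> K :: real
    and F :: "real^'n \<Rightarrow> real" and y :: "real^'n"
  assumes "rank A = CARD('n)"
    and "\<epsilon> \<ge> 0"
    and "F \<in> S_class A \<beta> \<epsilon>"
    and "\<delta> \<ge> 0"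
    and "max_norm (A *v y - \<beta>) \<le> \<delta>"
    and "K > 1"
  shows "\<forall>v. pos_vec v \<longrightarrow> (\<forall>i. inverse K \<le> v $ i \<and> v $ i \<le> K) \<longrightarrow>
           \<bar>F v - F (\<chi> i. 1) * vpow v y\<bar>
             \<le> \<bar>F v\<bar> * ((1 + \<epsilon>) * K powr (real CARD('m) * \<delta> * row_sum_norm (mp_pinv (transpose A))) - 1)"
proof (intro allI impI)
  fix v :: "real^'n"
  assume pv: "pos_vec v" and vb: "\<forall>i. inverse K \<le> v $ i \<and> v $ i \<le> K"
  define D where "D = mp_pinv (transpose A)"
  have BD: "transpose A ** D = mat 1" unfolding D_def using mp_right_inv assms(1) by blast
  define lv where "lv = (\<chi> j. ln (v $ j))"
  define w where "w = D *v lv"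
  have Bw: "transpose A *v w = lv"
    unfolding w_def by (simp add: matrix_vector_mul_assoc BD)
  have Bwj: "(\<Sum>i\<in>UNIV. A $ i $ j * w $ i) = ln (v $ j)" for j
  proof -
    have "(transpose A *v w) $ j = ln (v $ j)" using Bw lv_def by simp
    thus ?thesis by (simp add: matrix_vector_mult_def transpose_def)
  qed
  have vpos: "v $ j > 0" for j using pv pos_vec_def by blast
  define c where "c = (\<chi> i. exp (- (w $ i)))"
  have pc: "pos_vec c" unfolding pos_vec_def c_def by simp
  have vpc: "vpow c a = exp (- (\<Sum>i\<in>UNIV. a $ i * w $ i))" for a
    unfolding vpow_def c_def
    by (simp add: powr_def exp_sum[symmetric] sum_negf[symmetric] mult.commute)
  have one: "(\<chi> j. v $ j * vpow c (\<chi> i. A $ i $ j)) = (\<chi> i. 1)"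
  proof -
    have "v $ j * vpow c (\<chi> i. A $ i $ j) = 1" for j
      using vpos[of j] by (simp add: vpc Bwj exp_minus)
    thus ?thesis by (simp add: vec_eq_iff)
  qed
  define Sb where "Sb = (\<Sum>i\<in>UNIV. \<beta> $ i * w $ i)"
  define Sy where "Sy = (\<Sum>i\<in>UNIV. (A *v y) $ i * w $ i)"
  define E where "E = exp Sb"
  have Epos: "E > 0" unfolding E_def by simp
  have S: "\<bar>F (\<chi> i. 1) - F v * inverse E\<bar> \<le> \<epsilon> * \<bar>F v\<bar> * inverse E"
  proof -
    have "\<bar>F (\<chi> j. v $ j * vpow c (\<chi> i. A $ i $ j)) - F v * vpow c \<beta>\<bar> \<le> \<epsilon> * \<bar>F v\<bar> * vpow c \<beta>"
      using assms(3) pv pc unfolding S_class_def by blast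
    moreover have "vpow c \<beta> = inverse E" unfolding E_def Sb_def vpc by (rule exp_minus)
    ultimately show ?thesis unfolding one by simp
  qed
  have S2: "\<bar>F (\<chi> i. 1) * E - F v\<bar> \<le> \<epsilon> * \<bar>F v\<bar>"
  proof -
    have "\<bar>F (\<chi> i. 1) * E - F v\<bar> = \<bar>F (\<chi> i. 1) - F v * inverse E\<bar> * E"
      using Epos by (simp add: abs_mult[symmetric] field_simps)
    also have "\<dots> \<le> \<epsilon> * \<bar>F v\<bar> * inverse E * E" using S Epos by (simp add: mult_right_mono)
    also have "\<dots> = \<epsilon> * \<bar>F v\<bar>" using Epos by simp
    finally show ?thesis .
  qed
  have vne: "v $ j \<noteq> 0" for j using vpos[of j] by simp
  have vy: "vpow v y = exp Sy"
  proof -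
    have "vpow v y = (\<Prod>j\<in>UNIV. exp (y $ j * ln (v $ j)))"
      unfolding vpow_def by (rule prod.cong) (use vne in \<open>auto simp: powr_def mult.commute\<close>)
    also have "\<dots> = exp (\<Sum>j\<in>UNIV. y $ j * ln (v $ j))" by (rule exp_sum[symmetric]) simp
    also have "(\<Sum>j\<in>UNIV. y $ j * ln (v $ j)) = (\<Sum>j\<in>UNIV. y $ j * (\<Sum>i\<in>UNIV. A $ i $ j * w $ i))"
      by (simp add: Bwj)
    also have "\<dots> = (\<Sum>j\<in>UNIV. \<Sum>i\<in>UNIV. A $ i $ j * y $ j * w $ i)"
      by (simp add: sum_distrib_left mult_ac)
    also have "\<dots> = (\<Sum>i\<in>UNIV. \<Sum>j\<in>UNIV. A $ i $ j * y $ j * w $ i)" by (rule sum.swap)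
    also have "\<dots> = Sy" by (simp add: Sy_def matrix_vector_mult_def sum_distrib_right)
    finally show ?thesis .
  qed
  define s where "s = real CARD('m) * \<delta> * row_sum_norm D * ln K"
  have lnK: "\<bar>ln (v $ j)\<bar> \<le> ln K" for j
  proof -
    have "ln (v $ j) \<le> ln K" using vb vpos[of j] assms(6) by simp
    moreover have "ln (inverse K) \<le> ln (v $ j)" using vb vpos[of j] assms(6) by simp
    ultimately show ?thesis using assms(6) by (simp add: ln_inverse)
  qed
  have lnK0: "ln K \<ge> 0" using assms(6) by simp
  have wb: "\<bar>w $ i\<bar> \<le> row_sum_norm D * ln K" for i
  proof -
    have "\<bar>w $ i\<bar> = \<bar>\<Sum>j\<in>UNIV. D $ i $ j * ln (v $ j)\<bar>"
      unfolding w_def lv_def by (simp add: matrix_vector_mult_def)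
    also have "\<dots> \<le> (\<Sum>j\<in>UNIV. \<bar>D $ i $ j\<bar> * ln K)"
      by (rule order_trans[OF sum_abs]) (auto intro!: sum_mono simp: abs_mult lnK mult_left_mono)
    also have "\<dots> = (\<Sum>j\<in>UNIV. \<bar>D $ i $ j\<bar>) * ln K" by (simp add: sum_distrib_right)
    also have "\<dots> \<le> row_sum_norm D * ln K"
      unfolding row_sum_norm_def by (intro mult_right_mono Max_ge) (auto simp: lnK0)
    finally show ?thesis .
  qed
  have db: "\<bar>\<beta> $ i - (A *v y) $ i\<bar> \<le> \<delta>" for i
  proof -
    have "\<bar>(A *v y - \<beta>) $ i\<bar> \<le> max_norm (A *v y - \<beta>)"
      unfolding max_norm_def by (rule Max_ge) auto
    thus ?thesis using assms(5) by simp
  qed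
  have tb: "\<bar>Sb - Sy\<bar> \<le> s"
  proof -
    have "\<bar>Sb - Sy\<bar> = \<bar>\<Sum>i\<in>UNIV. (\<beta> $ i - (A *v y) $ i) * w $ i\<bar>"
      unfolding Sb_def Sy_def by (simp add: sum_subtractf left_diff_distrib)
    also have "\<dots> \<le> (\<Sum>i\<in>UNIV. \<bar>(\<beta> $ i - (A *v y) $ i) * w $ i\<bar>)" by (rule sum_abs)
    also have "\<dots> \<le> (\<Sum>i\<in>(UNIV::'m set). \<delta> * (row_sum_norm D * ln K))"
    proof (rule sum_mono)
      fix i :: 'm
      have "\<bar>(\<beta> $ i - (A *v y) $ i) * w $ i\<bar> = \<bar>\<beta> $ i - (A *v y) $ i\<bar> * \<bar>w $ i\<bar>" by (rule abs_mult)
      also have "\<dots> \<le> \<delta> * (row_sum_norm D * ln K)" by (rule mult_mono[OF db wb assms(4)]) simp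
      finally show "\<bar>(\<beta> $ i - (A *v y) $ i) * w $ i\<bar> \<le> \<delta> * (row_sum_norm D * ln K)" .
    qed
    also have "\<dots> = s" unfolding s_def by simp
    finally show ?thesis .
  qed
  have Ls: "K powr (real CARD('m) * \<delta> * row_sum_norm D) = exp s"
  proof -
    have "K \<noteq> 0" using assms(6) by simp
    hence "K powr (real CARD('m) * \<delta> * row_sum_norm D) = exp ((real CARD('m) * \<delta> * row_sum_norm D) * ln K)"
      by (simp add: powr_def)
    thus ?thesis unfolding s_def .
  qed
  define C where "C = F (\<chi> i. 1)"
  have S2': "\<bar>C * E - F v\<bar> \<le> \<epsilon> * \<bar>F v\<bar>" using S2 unfolding C_def .
  have CE: "\<bar>C\<bar> * E \<le> (1 + \<epsilon>) * \<bar>F v\<bar>"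
  proof -
    have "\<bar>C\<bar> * E = \<bar>C * E\<bar>" using Epos by (simp add: abs_mult)
    moreover have "\<bar>C * E\<bar> \<le> \<bar>C * E - F v\<bar> + \<bar>F v\<bar>" by linarith
    moreover have "(1 + \<epsilon>) * \<bar>F v\<bar> = \<bar>F v\<bar> + \<epsilon> * \<bar>F v\<bar>" by (simp add: distrib_right)
    ultimately show ?thesis using S2' by linarith
  qed
  have ED: "\<bar>E - exp Sy\<bar> \<le> E * (exp s - 1)"
  proof -
    have "\<bar>E - exp Sy\<bar> = E * \<bar>1 - exp (Sy - Sb)\<bar>"
    proof -
      have "E * exp (Sy - Sb) = exp Sy" unfolding E_def by (simp add: exp_add[symmetric])
      hence "E - exp Sy = E * (1 - exp (Sy - Sb))" by (simp add: right_diff_distrib)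
      thus ?thesis using Epos by (simp add: abs_mult)
    qed
    also have "\<dots> \<le> E * (exp \<bar>Sy - Sb\<bar> - 1)" by (rule mult_left_mono[OF abs_1_exp]) (use Epos in simp)
    also have "\<dots> \<le> E * (exp s - 1)"
    proof -
      have "\<bar>Sy - Sb\<bar> \<le> s" using tb by (simp add: abs_minus_commute)
      hence "exp \<bar>Sy - Sb\<bar> - 1 \<le> exp s - 1" by simp
      thus ?thesis by (rule mult_left_mono) (use Epos in simp)
    qed
    finally show ?thesis .
  qed
  have "\<bar>F v - C * exp Sy\<bar> \<le> \<bar>C * E - F v\<bar> + \<bar>C\<bar> * \<bar>E - exp Sy\<bar>"
  proof -
    have "F v - C * exp Sy = - (C * E - F v) + C * (E - exp Sy)" by (simp add: right_diff_distrib)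
    have "\<bar>F v - C * exp Sy\<bar> \<le> \<bar>- (C * E - F v)\<bar> + \<bar>C * (E - exp Sy)\<bar>"
      unfolding \<open>F v - C * exp Sy = - (C * E - F v) + C * (E - exp Sy)\<close> by (rule abs_triangle_ineq)
    thus ?thesis by (simp only: abs_mult abs_minus_cancel)
  qed
  also have "\<dots> \<le> \<epsilon> * \<bar>F v\<bar> + \<bar>C\<bar> * (E * (exp s - 1))"
    by (rule add_mono[OF S2' mult_left_mono[OF ED abs_ge_zero]])
  also have "\<dots> \<le> \<epsilon> * \<bar>F v\<bar> + (1 + \<epsilon>) * \<bar>F v\<bar> * (exp s - 1)"
  proof -
    have "s \<ge> 0" using tb abs_ge_zero[of "Sb - Sy"] by linarith
    hence "exp s - 1 \<ge> 0" using one_le_exp_iff[of s] by linarith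
    hence "\<bar>C\<bar> * E * (exp s - 1) \<le> (1 + \<epsilon>) * \<bar>F v\<bar> * (exp s - 1)" using CE by (rule mult_right_mono[rotated])
    hence "\<bar>C\<bar> * (E * (exp s - 1)) \<le> (1 + \<epsilon>) * \<bar>F v\<bar> * (exp s - 1)" by (simp only: mult.assoc)
    thus ?thesis by (rule add_left_mono)
  qed
  also have "\<dots> = \<bar>F v\<bar> * ((1 + \<epsilon>) * exp s - 1)" by (simp only: algebra_simps)
  finally have fin: "\<bar>F v - C * exp Sy\<bar> \<le> \<bar>F v\<bar> * ((1 + \<epsilon>) * exp s - 1)" .
  have Ls': "K powr (real CARD('m) * \<delta> * row_sum_norm (mp_pinv (transpose A))) = exp s"
    using Ls unfolding D_def .
  have e1: "F (\<chi> i. 1) * vpow v y = C * exp Sy" by (simp only: C_def vy)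
  show "\<bar>F v - F (\<chi> i. 1) * vpow v y\<bar>
             \<le> \<bar>F v\<bar> * ((1 + \<epsilon>) * K powr (real CARD('m) * \<delta> * row_sum_norm (mp_pinv (transpose A))) - 1)"
    unfolding e1 Ls' by (rule fin)
qed
end
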